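(* Let $\Sigma:\mathbb{R}\times\mathbb{R}_{>0}\times\mathcal{P}_{ac}^{+}(\mathbb{R})\to\mathbb{R}$ (drift) and $D:\mathbb{R}\times\mathbb{R}_{>0}\times\mathcal{P}_{ac}^{+}(\mathbb{R})\to\mathbb{R}_{>0}$ (diffusion) be given, where the third argument may be the whole current density (McKean–Vlasov type dependence). Let $\rho(x,t)>0$ be a sufficiently smooth solution of $$\partial_t\rho(x,t)=-\partial_x\big[\Sigma[x,t,\rho]\,\rho(x,t)\big]+\partial_x^2\big[D[x,t,\rho]\,\rho(x,t)\big],\qquad x\in\mathbb{R},\ t>0,$$ with initial condition $\rho(\cdot,0)=\rho_0\in\mathcal{P}_{ac}^{+}(\mathbb{R})$, such that for every $t$, $\rho(\cdot,t)\in\mathcal{P}_{ac}^{+}(\mathbb{R})$ (positive probability density with finite first moment), $\lim_{x\to\pm\infty}\rho(x,t)=0$, and such that the boundary terms at $-\infty$ vanish, i.e. $\Sigma\rho$, $\partial_x(D\rho)$, $D\rho$, $x\,\Sigma\rho$ and $x\,\partial_x(D\rho)$ all tend to $0$ as $x\to-\infty$. Define $F(x,t)=\int_{-\infty}^x\rho(y,t)\,dy$, $L(x,t)=\int_{-\infty}^x y\,\rho(y,t)\,dy$, let $G(\cdot,t):(0,1)\to\mathbb{R}$ be the inverse of $F(\cdot,t)$, and define the Lorenz curve $\mathcal{L}(f,t)=L(G(f,t),t)$ for $f\in[0,1]$. Then for $f\in(0,1)$ and $t>0$, $$\partial_t\mathcal{L}(f,t)=-\frac{\widetilde{D}[f,t,\mathcal{L}]}{\partial_f^2\mathcal{L}(f,t)}+\int_0^f\widetilde{\Sigma}[g,t,\mathcal{L}]\,dg,$$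 where $\widetilde{\Sigma}[f,t,\mathcal{L}]=\Sigma\big[\partial_f\mathcal{L}(f,t),\,t,\,(\partial_f^2\mathcal{L}(f,t))^{-1}\big]$ and $\widetilde{D}[f,t,\mathcal{L}]=D\big[\partial_f\mathcal{L}(f,t),\,t,\,(\partial_f^2\mathcal{L}(f,t))^{-1}\big]$; here the third argument denotes the density $\rho(\cdot,t)$ expressed through $\mathcal{L}$ via the identities $\partial_f\mathcal{L}(f,t)=G(f,t)$ and $\rho(G(f,t),t)=(\partial_f^2\mathcal{L}(f,t))^{-1}$ (so any integral functional $\int_{\mathbb{R}}Q(x)\rho(x,t)\,dx$ appearing in $\Sigma$ or $D$ becomes $\int_0^1 Q(\partial_g\mathcal{L}(g,t))\,dg$).
   Context: $\mathcal{P}_{ac}^{+}(\mathbb{R})$ denotes the space of Borel probability measures on $\mathbb{R}$ that are absolutely continuous with strictly positive density; such measures are identified with their densities. Since $\rho>0$, $F(\cdot,t)$ is strictly increasing from $0$ to $1$, so $G(\cdot,t)$ is well defined. *)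

theory Defs
  imports "HOL-Analysis.Analysis"
begin

definition dens :: "(real \<Rightarrow> real \<Rightarrow> real) \<Rightarrow> real \<Rightarrow> (real \<Rightarrow> real)" where
  "dens \<rho> t = (\<lambda>x. \<rho> x t)"

definition Pac_pos :: "(real \<Rightarrow> real) \<Rightarrow> bool" where
  "Pac_pos p \<longleftrightarrow> (\<forall>x. 0 < p x) \<and> p absolutely_integrable_on UNIV \<and> integral UNIV p = 1"

definition finite_first_moment :: "(real \<Rightarrow> real) \<Rightarrow> bool" where
  "finite_first_moment p \<longleftrightarrow> (\<lambda>x. x * p x) absolutely_integrable_on UNIV"

definition cdf :: "(real \<Rightarrow> real \<Rightarrow> real) \<Rightarrow> real \<Rightarrow> real \<Rightarrow> real" where
  "cdf \<rho> x t = integral {..x} (\<lambda>y. \<rho> y t)"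

definition pmom :: "(real \<Rightarrow> real \<Rightarrow> real) \<Rightarrow> real \<Rightarrow> real \<Rightarrow> real" where
  "pmom \<rho> x t = integral {..x} (\<lambda>y. y * \<rho> y t)"

definition quantile :: "(real \<Rightarrow> real \<Rightarrow> real) \<Rightarrow> real \<Rightarrow> real \<Rightarrow> real" where
  "quantile \<rho> f t = (THE x. cdf \<rho> x t = f)"

definition lorenz :: "(real \<Rightarrow> real \<Rightarrow> real) \<Rightarrow> real \<Rightarrow> real \<Rightarrow> real" where
  "lorenz \<rho> f t = pmom \<rho> (quantile \<rho> f t) t"

end

theory Submission
  imports Defs
begin


lemma ai_sub:
  fixes f :: "real \<Rightarrow> real"
  assumes "f absolutely_integrable_on UNIV" "S \<in> sets lebesgue"
  shows "f absolutely_integrable_on S"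
  using set_integrable_subset[of lebesgue UNIV f S] assms by auto

lemma ai_atMost:
  fixes f :: "real \<Rightarrow> real"
  assumes "f absolutely_integrable_on UNIV"
  shows "f absolutely_integrable_on {..x}" "f integrable_on {..x}"
    "f absolutely_integrable_on {a..b}" "f integrable_on {a..b}"
  using ai_sub[OF assms] by (auto intro: set_lebesgue_integral_eq_integral(1))

lemma int_split:
  fixes f :: "real \<Rightarrow> real"
  assumes "f absolutely_integrable_on UNIV" "a \<le> b"
  shows "integral {..b} f = integral {..a} f + integral {a..b} f"
proof -
  have "{..b} = {..a} \<union> {a..b}" using assms by auto
  moreover have "negligible ({..a} \<inter> {a..b})"
  proof -
    have "{..a} \<inter> {a..b} = {a}" using assms by auto
    then show ?thesis by simp
  qed
  ultimately show ?thesis using ai_atMost[OF assms(1)] by simp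
qed

lemma tail_bot:
  fixes f :: "real \<Rightarrow> real"
  assumes f: "f absolutely_integrable_on UNIV"
  shows "((\<lambda>x. integral {..x} f) \<longlongrightarrow> 0) at_bot"
proof (rule tendsto_at_botI_sequentially)
  fix X :: "nat \<Rightarrow> real" assume X: "filterlim X at_bot sequentially"
  have fi: "f integrable_on UNIV" "(\<lambda>x. norm (f x)) integrable_on UNIV"
    using f absolutely_integrable_on_def by blast+
  have i1: "\<And>k. (\<lambda>y. if y \<in> {..X k} then f y else 0) integrable_on UNIV"
      using ai_atMost(2)[OF f] integrable_restrict_UNIV by blast
  have i2: "\<And>k y. y \<in> UNIV \<Longrightarrow> norm (if y \<in> {..X k} then f y else 0) \<le> norm (f y)" by auto
  have i3: "(\<lambda>k. if y \<in> {..X k} then f y else 0) \<longlonglongrightarrow> (0::real)" if "y \<in> UNIV" for y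
    proof -
      have "eventually (\<lambda>k. X k < y) sequentially" using X filterlim_at_bot_dense by blast
      then have "eventually (\<lambda>k. (if y \<in> {..X k} then f y else 0) = 0) sequentially"
        by eventually_elim auto
      then show ?thesis by (simp add: tendsto_eventually)
    qed
  have "(\<lambda>k. integral UNIV (\<lambda>y. if y \<in> {..X k} then f y else 0)) \<longlonglongrightarrow> integral UNIV (\<lambda>y. 0::real)"
    using dominated_convergence(2)[OF i1 fi(2) i2 i3] by simp
  moreover have "\<And>n. integral UNIV (\<lambda>y. if y \<in> {..X n} then f y else 0) = integral {..X n} f"
    by (rule integral_restrict_UNIV)
  ultimately show "(\<lambda>n. integral {..X n} f) \<longlonglongrightarrow> 0" by simp
qed

lemma tail_top:
  fixes f :: "real \<Rightarrow> real"
  assumes f: "f absolutely_integrable_on UNIV"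
  shows "((\<lambda>x. integral {..x} f) \<longlongrightarrow> integral UNIV f) at_top"
proof (rule tendsto_at_topI_sequentially)
  fix X :: "nat \<Rightarrow> real" assume X: "filterlim X at_top sequentially"
  have fi: "f integrable_on UNIV" "(\<lambda>x. norm (f x)) integrable_on UNIV"
    using f absolutely_integrable_on_def by blast+
  have "(\<lambda>k. integral UNIV (\<lambda>y. if y \<in> {..X k} then f y else 0)) \<longlonglongrightarrow> integral UNIV f"
  proof (rule dominated_convergence(2)[where h="\<lambda>x. norm (f x)"])
    show "(\<lambda>y. if y \<in> {..X k} then f y else 0) integrable_on UNIV" for k
      using ai_atMost(2)[OF f] integrable_restrict_UNIV by blast
    show "(\<lambda>x. norm (f x)) integrable_on UNIV" by (rule fi)
    show "norm (if y \<in> {..X k} then f y else 0) \<le> norm (f y)" for k y by auto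
    show "(\<lambda>k. if y \<in> {..X k} then f y else 0) \<longlonglongrightarrow> f y" for y
    proof -
      have "eventually (\<lambda>k. X k > y) sequentially" using X filterlim_at_top_dense by blast
      then have "eventually (\<lambda>k. (if y \<in> {..X k} then f y else 0) = f y) sequentially"
        by eventually_elim auto
      then show ?thesis by (simp add: tendsto_eventually)
    qed
  qed
  moreover have "\<And>n. integral UNIV (\<lambda>y. if y \<in> {..X n} then f y else 0) = integral {..X n} f"
    by (rule integral_restrict_UNIV)
  ultimately show "(\<lambda>n. integral {..X n} f) \<longlonglongrightarrow> integral UNIV f" by simp
qed

lemma int_deriv:
  fixes f :: "real \<Rightarrow> real"
  assumes f: "f absolutely_integrable_on UNIV" and c: "continuous_on UNIV f"
  shows "((\<lambda>u. integral {..u} f) has_real_derivative f x) (at x)"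
proof -
  have "((\<lambda>u. integral {x-1..u} f) has_vector_derivative f x) (at x within ({x-1..x+1} - {}))"
    by (rule integral_has_vector_derivative_continuous_at)
       (use ai_atMost[OF f] c in \<open>auto intro: continuous_on_imp_continuous_within\<close>)
  then have "((\<lambda>u. integral {x-1..u} f) has_real_derivative f x) (at x)"
    by (simp add: at_within_Icc_at has_real_derivative_iff_has_vector_derivative)
  then have d: "((\<lambda>u. integral {..x-1} f + integral {x-1..u} f) has_real_derivative f x) (at x)"
    by (auto intro!: derivative_eq_intros)
  have e: "\<And>u. u \<in> {x-1<..} \<Longrightarrow> integral {..x-1} f + integral {x-1..u} f = integral {..u} f"
  proof -
    fix u assume "u \<in> {x-1<..}"
    then have "x - 1 \<le> u" by simp
    from int_split[OF f this] show "integral {..x-1} f + integral {x-1..u} f = integral {..u} f" by simp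
  qed
  show ?thesis
    by (rule has_field_derivative_transform_within_open[OF d, where S="{x-1<..}"]) (auto simp: e)
qed

lemma int_abs_le:
  fixes g :: "real \<Rightarrow> real"
  assumes "g absolutely_integrable_on UNIV"
  shows "\<bar>integral {..x} g\<bar> \<le> integral UNIV (\<lambda>y. \<bar>g y\<bar>)"
proof -
  have a: "g integrable_on {..x}" "(\<lambda>y. norm (g y)) integrable_on {..x}"
    using ai_atMost(1)[OF assms, of x] unfolding absolutely_integrable_on_def by auto
  have b: "(\<lambda>y. norm (g y)) integrable_on UNIV"
    using assms unfolding absolutely_integrable_on_def by auto
  have "norm (integral {..x} g) \<le> integral {..x} (\<lambda>y. norm (g y))"
    by (rule integral_norm_bound_integral[OF a]) simp
  also have "\<dots> \<le> integral UNIV (\<lambda>y. norm (g y))"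
    by (rule integral_subset_le[OF _ a(2) b]) auto
  finally show ?thesis by simp
qed

lemma mvt_bound:
  fixes g g' :: "real \<Rightarrow> real"
  assumes d: "\<And>\<sigma>. min a b \<le> \<sigma> \<Longrightarrow> \<sigma> \<le> max a b \<Longrightarrow> (g has_real_derivative g' \<sigma>) (at \<sigma>)"
    and B: "\<And>\<sigma>. min a b \<le> \<sigma> \<Longrightarrow> \<sigma> \<le> max a b \<Longrightarrow> \<bar>g' \<sigma>\<bar> \<le> B"
  shows "\<bar>g b - g a\<bar> \<le> B * \<bar>b - a\<bar>"
proof (cases a b rule: linorder_cases)
  case less
  then obtain z where z: "a < z" "z < b" "g b - g a = (b - a) * g' z"
    using MVT2[of a b g g'] d by force
  have "\<bar>g' z\<bar> \<le> B" using B z by auto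
  then show ?thesis using z less by (simp add: abs_mult mult.commute mult_left_mono)
next
  case greater
  then obtain z where z: "b < z" "z < a" "g a - g b = (a - b) * g' z"
    using MVT2[of b a g g'] d by force
  have "\<bar>g' z\<bar> \<le> B" using B z by auto
  then show ?thesis using z greater by (simp add: abs_mult mult.commute mult_left_mono abs_minus_commute)
qed simp

lemma sandwich_arith:
  fixes Ls Lt a1 a0 b1 b0 At As d e1 e2 :: real
  assumes "a1 \<le> Ls" "Lt = a0" "Ls = b1" "b0 \<le> Lt" "\<bar>a1 - a0 - At * d\<bar> \<le> e1"
    "\<bar>b1 - b0 - As * d\<bar> \<le> e2" "0 \<le> e1" "0 \<le> e2"
  shows "\<bar>Ls - Lt - At * d\<bar> \<le> e1 + e2 + \<bar>As - At\<bar> * \<bar>d\<bar>"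
proof -
  have pr: "(As - At) * d \<le> \<bar>As - At\<bar> * \<bar>d\<bar>" by (metis abs_ge_self abs_mult)
  have e: "Ls - Lt - At * d = (b1 - b0 - As * d) + (As - At) * d + (b0 - Lt)"
    using assms(3) by (simp add: algebra_simps)
  have lo: "- e1 \<le> Ls - Lt - At * d" using assms(1,2,5) abs_le_D2[OF assms(5)] by linarith
  have up: "Ls - Lt - At * d \<le> e2 + \<bar>As - At\<bar> * \<bar>d\<bar>"
    using e abs_le_D1[OF assms(6)] pr assms(4) by linarith
  have "0 \<le> \<bar>As - At\<bar> * \<bar>d\<bar>" by simp
  then show ?thesis using lo up assms(7,8) by linarith
qed

lemma div_arith:
  fixes Ls Lt At d S :: real
  assumes "d \<noteq> 0" "\<bar>Ls - Lt - At * d\<bar> \<le> S"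
  shows "\<bar>(Ls - Lt) / d - At\<bar> \<le> S / \<bar>d\<bar>"
proof -
  have "(Ls - Lt) / d - At = (Ls - Lt - At * d) / d" using assms(1) by (simp add: field_simps)
  then have "\<bar>(Ls - Lt) / d - At\<bar> = \<bar>Ls - Lt - At * d\<bar> / \<bar>d\<bar>" by (simp add: abs_divide)
  also have "\<dots> \<le> S / \<bar>d\<bar>" by (rule divide_right_mono[OF assms(2)]) simp
  finally show ?thesis .
qed

lemma B_arith:
  fixes a b c w d :: real
  assumes "d \<noteq> 0"
  shows "(a * w + b * w + c * \<bar>d\<bar>) / \<bar>d\<bar> = a * (w / \<bar>d\<bar>) + b * (w / \<bar>d\<bar>) + c"
  using assms by (simp add: add_divide_distrib)


locale pdens =
  fixes p :: "real \<Rightarrow> real"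
  assumes p_pos: "\<And>x. 0 < p x"
    and p_ai: "p absolutely_integrable_on UNIV"
    and p_one: "integral UNIV p = 1"
    and p_cont: "continuous_on UNIV p"
begin

definition C :: "real \<Rightarrow> real" where "C x = integral {..x} p"
definition Q :: "real \<Rightarrow> real" where "Q f = (THE x. C x = f)"

lemma C_deriv: "(C has_real_derivative p x) (at x)"
  unfolding C_def[abs_def] by (rule int_deriv[OF p_ai p_cont])

lemma C_cont: "isCont C x"
  using C_deriv DERIV_isCont by blast

lemma C_contOn: "continuous_on S C"
  using C_cont continuous_at_imp_continuous_on by blast

lemma C_less: assumes "a < b" shows "C a < C b"
  using DERIV_pos_imp_increasing[of a b C] C_deriv p_pos assms by blast

lemma C_le_iff: "C a \<le> C b \<longleftrightarrow> a \<le> b"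
  using C_less[of a b] C_less[of b a] by (cases a b rule: linorder_cases) auto

lemma C_less_iff: "C a < C b \<longleftrightarrow> a < b"
  using C_less[of a b] C_less[of b a] by (cases a b rule: linorder_cases) auto

lemma C_inj: "C a = C b \<longleftrightarrow> a = b"
  using C_less[of a b] C_less[of b a] by (cases a b rule: linorder_cases) auto

lemma C_nonneg: "0 \<le> C x"
  unfolding C_def using ai_atMost(2)[OF p_ai] p_pos
  by (intro integral_nonneg) (auto intro: less_imp_le)

lemma C_le1: "C x \<le> 1"
proof -
  have "C x = integral {..x} p" by (simp add: C_def)
  also have "\<dots> \<le> integral UNIV p"
    by (rule integral_subset_le) (use ai_atMost(2)[OF p_ai] p_ai p_pos in \<open>auto intro: less_imp_le simp: absolutely_integrable_on_def\<close>)
  finally show ?thesis using p_one by simp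
qed

lemma C_pos: "0 < C x"
  using C_nonneg[of "x-1"] C_less[of "x-1" x] by simp

lemma C_lt1: "C x < 1"
  using C_le1[of "x+1"] C_less[of x "x+1"] by simp

lemma C_bot: "(C \<longlongrightarrow> 0) at_bot"
  unfolding C_def[abs_def] by (rule tail_bot[OF p_ai])

lemma C_top: "(C \<longlongrightarrow> 1) at_top"
  using tail_top[OF p_ai] p_one unfolding C_def[abs_def] by simp

lemma C_ex: assumes "0 < f" "f < 1" shows "\<exists>x. C x = f"
proof -
  have "eventually (\<lambda>x. C x < f) at_bot" using order_tendstoD(2)[OF C_bot assms(1)] .
  then obtain a where a: "C a < f" unfolding eventually_at_bot_linorder by auto
  have "eventually (\<lambda>x. C x > f) at_top" using order_tendstoD(1)[OF C_top assms(2)] .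
  then obtain b where b: "C b > f" unfolding eventually_at_top_linorder by auto
  have "a \<le> b" using a b C_le_iff[of b a] by linarith
  from IVT'[of C a f b, OF _ _ this C_contOn] a b show ?thesis by auto
qed

lemma CQ: assumes "0 < f" "f < 1" shows "C (Q f) = f"
proof -
  obtain x where x: "C x = f" using C_ex[OF assms] by blast
  have "C (THE x. C x = f) = f"
    by (rule theI[of _ x]) (use x C_inj in auto)
  then show ?thesis by (simp add: Q_def)
qed

lemma QC: "Q (C x) = x"
  unfolding Q_def by (rule the_equality) (auto simp: C_inj)

lemma Q_unique: assumes "C x = f" shows "Q f = x"
  using QC assms by blast

lemma Q_cont: assumes "0 < g" "g < 1" shows "isCont Q g"
proof -
  have "isCont Q (C (Q g))"
    by (rule isCont_inverse_function[where d=1]) (auto simp: QC C_cont)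
  then show ?thesis using CQ[OF assms] by simp
qed

lemma Q_deriv: assumes "0 < g" "g < 1" shows "(Q has_real_derivative inverse (p (Q g))) (at g)"
proof (rule DERIV_inverse_function[where f=C and a=0 and b=1])
  show "DERIV C (Q g) :> p (Q g)" by (rule C_deriv)
  show "p (Q g) \<noteq> 0" using p_pos[of "Q g"] by simp
  show "0 < g" "g < 1" by (rule assms)+
  show "\<And>y. 0 < y \<Longrightarrow> y < 1 \<Longrightarrow> C (Q y) = y" by (rule CQ)
  show "isCont Q g" by (rule Q_cont[OF assms])
qed

lemma Q_bot: "filterlim Q at_bot (at_right 0)"
  unfolding filterlim_at_bot_dense
proof
  fix Z :: real
  have c: "0 < C Z" "C Z < 1" by (rule C_pos, rule C_lt1)
  show "eventually (\<lambda>g. Q g < Z) (at_right 0)"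
    unfolding eventually_at_right_field
  proof (intro exI[of _ "C Z"] conjI allI impI)
    fix y :: real assume y: "0 < y" "y < C Z"
    then have "C (Q y) < C Z" using CQ[of y] c by simp
    then show "Q y < Z" using C_less_iff by blast
  qed (use c in auto)
qed

end

locale pdens1 = pdens +
  assumes m_ai: "(\<lambda>y. y * p y) absolutely_integrable_on UNIV"
begin

definition Lor :: "real \<Rightarrow> real" where "Lor g = integral {..Q g} (\<lambda>y. y * p y)"

lemma Lor_deriv: assumes "0 < g" "g < 1" shows "(Lor has_real_derivative Q g) (at g)"
proof -
  have c: "continuous_on UNIV (\<lambda>y. y * p y)"
    by (intro continuous_intros p_cont)
  have "((\<lambda>g. integral {..Q g} (\<lambda>y. y * p y)) has_real_derivative (Q g * p (Q g)) * inverse (p (Q g))) (at g)"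
    by (rule DERIV_chain2[OF int_deriv[OF m_ai c] Q_deriv[OF assms]])
  moreover have "Lor = (\<lambda>g. integral {..Q g} (\<lambda>y. y * p y))" by (rule ext) (simp add: Lor_def)
  moreover have "Q g * p (Q g) * inverse (p (Q g)) = Q g" using p_pos[of "Q g"] by simp
  ultimately show ?thesis by simp
qed

lemma dLor: assumes "0 < g" "g < 1" shows "deriv Lor g = Q g"
  using Lor_deriv[OF assms] DERIV_imp_deriv by blast

lemma ddLor: assumes "0 < g" "g < 1" shows "deriv (deriv Lor) g = inverse (p (Q g))"
proof -
  have "(deriv Lor has_real_derivative inverse (p (Q g))) (at g)"
    by (rule has_field_derivative_transform_within_open[OF Q_deriv[OF assms], where S="{0<..<1}"])
       (use assms dLor in auto)
  then show ?thesis using DERIV_imp_deriv by blast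
qed

lemma ddLor_C: "1 / deriv (deriv Lor) (C x) = p x"
  using ddLor[OF C_pos C_lt1] by (simp add: QC divide_inverse)

end



lemma pdens_C_eq: "pdens p \<Longrightarrow> pdens.C p x = integral {..x} p" by (rule pdens.C_def)
lemma pdens_Q_eq: "pdens p \<Longrightarrow> pdens.Q p f = (THE x. integral {..x} p = f)" by (simp add: pdens.Q_def pdens.C_def)
lemma pdens_Lor_eq: "pdens1 p \<Longrightarrow> pdens1.Lor p g = integral {..pdens.Q p g} (\<lambda>y. y * p y)" by (rule pdens1.Lor_def)

context
  fixes \<rho> :: "real \<Rightarrow> real \<Rightarrow> real" and t f \<epsilon> :: real and h :: "real \<Rightarrow> real"
  assumes dens_ok: "\<And>t. 0 \<le> t \<Longrightarrow> Pac_pos (dens \<rho> t) \<and> finite_first_moment (dens \<rho> t)"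
    and cont_rho: "continuous_on (UNIV \<times> {0<..}) (\<lambda>(x, t). \<rho> x t)"
    and diff_t: "\<And>x t. 0 < t \<Longrightarrow> (\<lambda>s. \<rho> x s) differentiable (at t)"
    and cont_rho_t: "continuous_on (UNIV \<times> {0<..}) (\<lambda>(x, t). deriv (\<lambda>s. \<rho> x s) t)"
    and eps: "0 < \<epsilon>" "\<epsilon> < t"
    and h_ai: "h absolutely_integrable_on UNIV"
    and h_bd: "\<And>s y. \<bar>s - t\<bar> < \<epsilon> \<Longrightarrow> (1 + \<bar>y\<bar>) * \<bar>deriv (\<lambda>r. \<rho> y r) s\<bar> \<le> h y"
    and f_in: "0 < f" "f < 1"
  fixes \<Sigma> D :: "real \<Rightarrow> real \<Rightarrow> (real \<Rightarrow> real) \<Rightarrow> real"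
  assumes diff_drift: "\<And>x t. 0 < t \<Longrightarrow> (\<lambda>y. \<Sigma> y t (dens \<rho> t) * \<rho> y t) differentiable (at x)"
    and diff_diff1: "\<And>x t. 0 < t \<Longrightarrow> (\<lambda>y. D y t (dens \<rho> t) * \<rho> y t) differentiable (at x)"
    and diff_diff2: "\<And>x t. 0 < t \<Longrightarrow> deriv (\<lambda>y. D y t (dens \<rho> t) * \<rho> y t) differentiable (at x)"
    and pde: "\<And>x t. 0 < t \<Longrightarrow>
         deriv (\<lambda>s. \<rho> x s) t =
           - deriv (\<lambda>y. \<Sigma> y t (dens \<rho> t) * \<rho> y t) x
           + deriv (deriv (\<lambda>y. D y t (dens \<rho> t) * \<rho> y t)) x"
    and bdry: "\<And>t. 0 < t \<Longrightarrow>
         ((\<lambda>x. \<Sigma> x t (dens \<rho> t) * \<rho> x t) \<longlongrightarrow> 0) at_bot \<and>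
         ((\<lambda>x. deriv (\<lambda>y. D y t (dens \<rho> t) * \<rho> y t) x) \<longlongrightarrow> 0) at_bot \<and>
         ((\<lambda>x. D x t (dens \<rho> t) * \<rho> x t) \<longlongrightarrow> 0) at_bot \<and>
         ((\<lambda>x. x * (\<Sigma> x t (dens \<rho> t) * \<rho> x t)) \<longlongrightarrow> 0) at_bot \<and>
         ((\<lambda>x. x * deriv (\<lambda>y. D y t (dens \<rho> t) * \<rho> y t) x) \<longlongrightarrow> 0) at_bot"
begin

lemma t_pos: "0 < t" using eps by simp

lemma cont_y: assumes "0 < s" shows "continuous_on UNIV (\<lambda>y. \<rho> y s)"
proof -
  have "continuous_on UNIV (\<lambda>y. (\<lambda>(x, t). \<rho> x t) (y, s))"
    by (rule continuous_on_compose2[OF cont_rho]) (use assms in \<open>auto intro!: continuous_intros\<close>)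
  then show ?thesis by simp
qed

lemma rd_cont: assumes "0 < s" shows "continuous_on UNIV (\<lambda>y. deriv (\<lambda>r. \<rho> y r) s)"
proof -
  have "continuous_on UNIV (\<lambda>y. (\<lambda>(x, t). deriv (\<lambda>s. \<rho> x s) t) (y, s))"
    by (rule continuous_on_compose2[OF cont_rho_t]) (use assms in \<open>auto intro!: continuous_intros\<close>)
  then show ?thesis by simp
qed

lemma dens_facts: assumes "0 \<le> s"
  shows "\<And>x. 0 < \<rho> x s" "(\<lambda>y. \<rho> y s) absolutely_integrable_on UNIV"
    "integral UNIV (\<lambda>y. \<rho> y s) = 1" "(\<lambda>y. y * \<rho> y s) absolutely_integrable_on UNIV"
  using dens_ok[OF assms] unfolding Pac_pos_def finite_first_moment_def dens_def by auto

lemma pd: assumes "0 < s" shows "pdens1 (\<lambda>y. \<rho> y s)"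
  using dens_facts[of s] cont_y[OF assms] assms unfolding pdens1_def pdens_def pdens1_axioms_def by auto

lemma pd0: assumes "0 < s" shows "pdens (\<lambda>y. \<rho> y s)"
  using pd[OF assms] pdens1.axioms(1) by blast

lemma cdf_eq: "0 < s \<Longrightarrow> cdf \<rho> x s = pdens.C (\<lambda>y. \<rho> y s) x"
  by (simp add: cdf_def pdens_C_eq pd0)

lemma quantile_eq: "0 < s \<Longrightarrow> quantile \<rho> g s = pdens.Q (\<lambda>y. \<rho> y s) g"
  by (simp add: quantile_def pdens_Q_eq cdf_def pd0)

lemma lorenz_eq: "0 < s \<Longrightarrow> lorenz \<rho> g s = pdens1.Lor (\<lambda>y. \<rho> y s) g"
  by (simp add: lorenz_def pmom_def pdens_Lor_eq quantile_eq pd)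

lemma h_nonneg: "0 \<le> h y"
proof -
  have "0 \<le> (1 + \<bar>y\<bar>) * \<bar>deriv (\<lambda>r. \<rho> y r) t\<bar>" by simp
  also have "\<dots> \<le> h y" using h_bd[of t y] eps by simp
  finally show ?thesis .
qed

lemma rd_bd: assumes "\<bar>s - t\<bar> < \<epsilon>"
  shows "\<bar>deriv (\<lambda>r. \<rho> y r) s\<bar> \<le> h y / (1 + \<bar>y\<bar>)"
    "\<bar>deriv (\<lambda>r. \<rho> y r) s\<bar> \<le> h y" "\<bar>y * deriv (\<lambda>r. \<rho> y r) s\<bar> \<le> h y"
proof -
  have b: "(1 + \<bar>y\<bar>) * \<bar>deriv (\<lambda>r. \<rho> y r) s\<bar> \<le> h y" by (rule h_bd[OF assms])
  then show "\<bar>deriv (\<lambda>r. \<rho> y r) s\<bar> \<le> h y / (1 + \<bar>y\<bar>)"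
    by (simp add: pos_le_divide_eq mult.commute)
  have "\<bar>deriv (\<lambda>r. \<rho> y r) s\<bar> \<le> (1 + \<bar>y\<bar>) * \<bar>deriv (\<lambda>r. \<rho> y r) s\<bar>"
    using mult_right_mono[of 1 "1 + \<bar>y\<bar>" "\<bar>deriv (\<lambda>r. \<rho> y r) s\<bar>"] by simp
  then show "\<bar>deriv (\<lambda>r. \<rho> y r) s\<bar> \<le> h y" using b by linarith
  have "\<bar>y * deriv (\<lambda>r. \<rho> y r) s\<bar> \<le> (1 + \<bar>y\<bar>) * \<bar>deriv (\<lambda>r. \<rho> y r) s\<bar>"
    using mult_right_mono[of "\<bar>y\<bar>" "1 + \<bar>y\<bar>" "\<bar>deriv (\<lambda>r. \<rho> y r) s\<bar>"] by (simp add: abs_mult)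
  then show "\<bar>y * deriv (\<lambda>r. \<rho> y r) s\<bar> \<le> h y" using b by linarith
qed

lemma rd_ai: assumes "\<bar>s - t\<bar> < \<epsilon>"
  shows "(\<lambda>y. deriv (\<lambda>r. \<rho> y r) s) absolutely_integrable_on UNIV"
    "(\<lambda>y. y * deriv (\<lambda>r. \<rho> y r) s) absolutely_integrable_on UNIV"
proof -
  have s: "0 < s" using assms eps by simp
  have hi: "h integrable_on UNIV" using h_ai absolutely_integrable_on_def by blast
  show "(\<lambda>y. deriv (\<lambda>r. \<rho> y r) s) absolutely_integrable_on UNIV"
    by (rule measurable_bounded_by_integrable_imp_absolutely_integrable[OF _ _ hi])
       (use rd_bd[OF assms] continuous_imp_measurable_on_sets_lebesgue[OF rd_cont[OF s]] in auto)
  have "continuous_on UNIV (\<lambda>y. y * deriv (\<lambda>r. \<rho> y r) s)"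
    by (intro continuous_intros rd_cont[OF s])
  from continuous_imp_measurable_on_sets_lebesgue[OF this]
  show "(\<lambda>y. y * deriv (\<lambda>r. \<rho> y r) s) absolutely_integrable_on UNIV"
    by (intro measurable_bounded_by_integrable_imp_absolutely_integrable[OF _ _ hi])
       (use rd_bd[OF assms] in auto)
qed

lemma rho_deriv: assumes "0 < s" shows "((\<lambda>r. \<rho> y r) has_real_derivative deriv (\<lambda>r. \<rho> y r) s) (at s)"
  using diff_t[OF assms] DERIV_deriv_iff_real_differentiable by blast

lemma mv: assumes "\<bar>s - t\<bar> < \<epsilon>"
  shows "\<bar>\<rho> y s - \<rho> y t\<bar> \<le> (h y / (1 + \<bar>y\<bar>)) * \<bar>s - t\<bar>"
proof (rule mvt_bound[where g="\<lambda>r. \<rho> y r" and g'="\<lambda>r. deriv (\<lambda>r. \<rho> y r) r"])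
  fix \<sigma> assume "min t s \<le> \<sigma>" "\<sigma> \<le> max t s"
  then have "\<bar>\<sigma> - t\<bar> < \<epsilon>" "0 < \<sigma>" using assms eps by auto
  then show "((\<lambda>r. \<rho> y r) has_real_derivative deriv (\<lambda>r. \<rho> y r) \<sigma>) (at \<sigma>)"
    "\<bar>deriv (\<lambda>r. \<rho> y r) \<sigma>\<bar> \<le> h y / (1 + \<bar>y\<bar>)"
    using rho_deriv rd_bd by auto
qed

lemma mv2: assumes "\<bar>s - t\<bar> < \<epsilon>"
  shows "\<bar>\<rho> y s - \<rho> y t\<bar> \<le> h y * \<bar>s - t\<bar>"
proof -
  have "h y / (1 + \<bar>y\<bar>) \<le> h y" using h_nonneg[of y]
    by (simp add: divide_le_eq mult_le_cancel_left1)
  then show ?thesis using mv[OF assms, of y] by (smt (verit) abs_ge_zero mult_right_mono)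
qed


lemma K_max: assumes s: "0 < s"
  shows "pmom \<rho> x s + x * (f - cdf \<rho> x s) \<le> lorenz \<rho> f s"
proof -
  interpret P: pdens1 "\<lambda>y. \<rho> y s" by (rule pd[OF s])
  define G where "G = P.Q f"
  have CG: "P.C G = f" unfolding G_def by (rule P.CQ[OF f_in])
  define K where "K x = integral {..x} (\<lambda>y. y * \<rho> y s) + x * (f - P.C x)" for x
  have mc: "continuous_on UNIV (\<lambda>y. y * \<rho> y s)" by (intro continuous_intros cont_y[OF s])
  have Kd: "(K has_real_derivative (f - P.C z)) (at z)" for z
  proof -
    have d1: "((\<lambda>x. integral {..x} (\<lambda>y. y * \<rho> y s)) has_real_derivative z * \<rho> z s) (at z)"
      by (rule int_deriv[OF P.m_ai mc])
    have d2: "((\<lambda>x. f - P.C x) has_real_derivative 0 - \<rho> z s) (at z)"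
      by (rule DERIV_diff[OF DERIV_const P.C_deriv])
    have d3: "((\<lambda>x. x * (f - P.C x)) has_real_derivative 1 * (f - P.C z) + (0 - \<rho> z s) * z) (at z)"
      by (rule DERIV_mult[OF DERIV_ident d2])
    have "(K has_real_derivative (z * \<rho> z s + (1 * (f - P.C z) + (0 - \<rho> z s) * z))) (at z)"
      unfolding K_def[abs_def] by (rule DERIV_add[OF d1 d3])
    then show ?thesis by (simp add: algebra_simps)
  qed
  have Kc: "continuous_on S K" for S
    using Kd DERIV_isCont continuous_at_imp_continuous_on by blast
  have LK: "lorenz \<rho> f s = K G"
    using CG by (simp add: lorenz_eq[OF s] P.Lor_def K_def G_def)
  have lhs: "pmom \<rho> x s + x * (f - cdf \<rho> x s) = K x"
    by (simp add: pmom_def cdf_eq[OF s] K_def)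
  have "K x \<le> K G"
  proof (cases "x \<le> G")
    case True
    show ?thesis
    proof (rule DERIV_nonneg_imp_increasing_open[OF True _ Kc])
      fix z assume "x < z" "z < G"
      then have "P.C z \<le> f" using CG P.C_le_iff[of z G] by simp
      then show "\<exists>y. (K has_real_derivative y) (at z) \<and> 0 \<le> y"
        by (intro exI[of _ "f - P.C z"] conjI Kd) simp
    qed
  next
    case False
    then have GX: "G \<le> x" by simp
    show ?thesis
    proof (rule DERIV_nonpos_imp_decreasing_open[OF GX _ Kc])
      fix z assume "G < z" "z < x"
      then have "f \<le> P.C z" using CG P.C_le_iff[of G z] by simp
      then show "\<exists>y. (K has_real_derivative y) (at z) \<and> y \<le> 0"
        by (intro exI[of _ "f - P.C z"] conjI Kd) simp
    qed
  qed
  then show ?thesis using LK lhs by simp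
qed

lemma lorenz_K: assumes s: "0 < s"
  shows "lorenz \<rho> f s = pmom \<rho> (quantile \<rho> f s) s + quantile \<rho> f s * (f - cdf \<rho> (quantile \<rho> f s) s)"
proof -
  interpret P: pdens1 "\<lambda>y. \<rho> y s" by (rule pd[OF s])
  have "cdf \<rho> (quantile \<rho> f s) s = f" using P.CQ[OF f_in] by (simp add: cdf_eq[OF s] quantile_eq[OF s])
  then show ?thesis by (simp add: lorenz_def)
qed

lemma lin3:
  fixes a b c :: "real \<Rightarrow> real"
  assumes "a integrable_on S" "b integrable_on S" "c integrable_on S"
  shows "integral S (\<lambda>y. a y - b y - k * c y) = integral S a - integral S b - k * integral S c"
proof -
  have "integral S (\<lambda>y. a y - b y - k * c y) = integral S (\<lambda>y. a y - b y) - integral S (\<lambda>y. k * c y)"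
    by (rule integral_diff) (use assms in \<open>auto intro: integrable_diff integrable_on_mult_right\<close>)
  also have "\<dots> = integral S a - integral S b - k * integral S c"
    using assms by (simp add: integral_diff)
  finally show ?thesis .
qed

lemma R_ai: assumes "\<bar>s - t\<bar> < \<epsilon>"
  shows "(\<lambda>y. \<rho> y s - \<rho> y t - (s - t) * deriv (\<lambda>r. \<rho> y r) t) absolutely_integrable_on UNIV"
    "(\<lambda>y. y * (\<rho> y s - \<rho> y t - (s - t) * deriv (\<lambda>r. \<rho> y r) t)) absolutely_integrable_on UNIV"
proof -
  have s: "0 \<le> s" using assms eps by simp
  have t: "0 \<le> t" using eps by simp
  have r: "\<bar>t - t\<bar> < \<epsilon>" using eps by simp
  show "(\<lambda>y. \<rho> y s - \<rho> y t - (s - t) * deriv (\<lambda>r. \<rho> y r) t) absolutely_integrable_on UNIV"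
    by (intro set_integral_diff(1) set_integrable_mult_right dens_facts(2) s t rd_ai(1)[OF r])
  have "(\<lambda>y. y * \<rho> y s - y * \<rho> y t - (s - t) * (y * deriv (\<lambda>r. \<rho> y r) t)) absolutely_integrable_on UNIV"
    by (intro set_integral_diff(1) set_integrable_mult_right dens_facts(4) s t rd_ai(2)[OF r])
  then show "(\<lambda>y. y * (\<rho> y s - \<rho> y t - (s - t) * deriv (\<lambda>r. \<rho> y r) t)) absolutely_integrable_on UNIV"
    by (simp add: algebra_simps)
qed

lemma K_diff: assumes st: "\<bar>s - t\<bar> < \<epsilon>"
  shows "(pmom \<rho> x s + x * (f - cdf \<rho> x s)) - (pmom \<rho> x t + x * (f - cdf \<rho> x t))
     - (integral {..x} (\<lambda>y. y * deriv (\<lambda>r. \<rho> y r) t) - x * integral {..x} (\<lambda>y. deriv (\<lambda>r. \<rho> y r) t)) * (s - t)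
   = integral {..x} (\<lambda>y. y * (\<rho> y s - \<rho> y t - (s - t) * deriv (\<lambda>r. \<rho> y r) t))
     - x * integral {..x} (\<lambda>y. \<rho> y s - \<rho> y t - (s - t) * deriv (\<lambda>r. \<rho> y r) t)"
proof -
  have s: "0 \<le> s" using st eps by simp
  have t: "0 \<le> t" using eps by simp
  have r: "\<bar>t - t\<bar> < \<epsilon>" using eps by simp
  have e1: "integral {..x} (\<lambda>y. y * (\<rho> y s - \<rho> y t - (s - t) * deriv (\<lambda>r. \<rho> y r) t))
      = integral {..x} (\<lambda>y. y * \<rho> y s) - integral {..x} (\<lambda>y. y * \<rho> y t) - (s - t) * integral {..x} (\<lambda>y. y * deriv (\<lambda>r. \<rho> y r) t)"
  proof -
    have "integral {..x} (\<lambda>y. y * (\<rho> y s - \<rho> y t - (s - t) * deriv (\<lambda>r. \<rho> y r) t))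
       = integral {..x} (\<lambda>y. y * \<rho> y s - y * \<rho> y t - (s - t) * (y * deriv (\<lambda>r. \<rho> y r) t))"
      by (simp add: algebra_simps)
    also have "\<dots> = integral {..x} (\<lambda>y. y * \<rho> y s) - integral {..x} (\<lambda>y. y * \<rho> y t) - (s - t) * integral {..x} (\<lambda>y. y * deriv (\<lambda>r. \<rho> y r) t)"
      by (rule lin3) (intro ai_atMost(2) dens_facts(4) s t rd_ai(2)[OF r])+
    finally show ?thesis .
  qed
  have e2: "integral {..x} (\<lambda>y. \<rho> y s - \<rho> y t - (s - t) * deriv (\<lambda>r. \<rho> y r) t)
      = integral {..x} (\<lambda>y. \<rho> y s) - integral {..x} (\<lambda>y. \<rho> y t) - (s - t) * integral {..x} (\<lambda>y. deriv (\<lambda>r. \<rho> y r) t)"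
    by (rule lin3) (intro ai_atMost(2) dens_facts(2) s t rd_ai(1)[OF r])+
  show ?thesis unfolding e1 e2 pmom_def cdf_def by (simp add: algebra_simps)
qed

lemma e_bound: assumes st: "\<bar>s - t\<bar> < \<epsilon>"
  shows "\<bar>integral {..x} (\<lambda>y. y * (\<rho> y s - \<rho> y t - (s - t) * deriv (\<lambda>r. \<rho> y r) t))
     - x * integral {..x} (\<lambda>y. \<rho> y s - \<rho> y t - (s - t) * deriv (\<lambda>r. \<rho> y r) t)\<bar>
     \<le> (1 + \<bar>x\<bar>) * integral UNIV (\<lambda>y. (1 + \<bar>y\<bar>) * \<bar>\<rho> y s - \<rho> y t - (s - t) * deriv (\<lambda>r. \<rho> y r) t\<bar>)"
proof -
  define R where "R y = \<rho> y s - \<rho> y t - (s - t) * deriv (\<lambda>r. \<rho> y r) t" for y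
  have R1: "R absolutely_integrable_on UNIV" and R2: "(\<lambda>y. y * R y) absolutely_integrable_on UNIV"
    using R_ai[OF st] unfolding R_def by auto
  have aR1: "(\<lambda>y. \<bar>R y\<bar>) integrable_on UNIV" and aR2: "(\<lambda>y. \<bar>y * R y\<bar>) integrable_on UNIV"
    using R1 R2 unfolding absolutely_integrable_on_def by auto
  have W: "(\<lambda>y. (1 + \<bar>y\<bar>) * \<bar>R y\<bar>) = (\<lambda>y. \<bar>R y\<bar> + \<bar>y * R y\<bar>)"
    by (auto simp: algebra_simps abs_mult)
  have Wi: "(\<lambda>y. (1 + \<bar>y\<bar>) * \<bar>R y\<bar>) integrable_on UNIV"
    unfolding W by (intro integrable_add aR1 aR2)
  define \<omega> where "\<omega> = integral UNIV (\<lambda>y. (1 + \<bar>y\<bar>) * \<bar>R y\<bar>)"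
  have b1: "integral UNIV (\<lambda>y. \<bar>R y\<bar>) \<le> \<omega>"
    unfolding \<omega>_def by (rule integral_le[OF aR1 Wi]) (auto simp: algebra_simps)
  have b2: "integral UNIV (\<lambda>y. \<bar>y * R y\<bar>) \<le> \<omega>"
    unfolding \<omega>_def by (rule integral_le[OF aR2 Wi]) (auto simp: algebra_simps abs_mult)
  have "\<bar>integral {..x} (\<lambda>y. y * R y)\<bar> \<le> \<omega>" using int_abs_le[OF R2, of x] b2 by linarith
  moreover have "\<bar>x * integral {..x} R\<bar> \<le> \<bar>x\<bar> * \<omega>"
    using int_abs_le[OF R1, of x] b1 by (simp add: abs_mult mult_left_mono)
  ultimately have "\<bar>integral {..x} (\<lambda>y. y * R y) - x * integral {..x} R\<bar> \<le> (1 + \<bar>x\<bar>) * \<omega>"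
    by (simp add: algebra_simps)
  then show ?thesis unfolding R_def \<omega>_def .
qed


abbreviation "rd y s \<equiv> deriv (\<lambda>r. \<rho> y r) s"
abbreviation "Rf s y \<equiv> \<rho> y s - \<rho> y t - (s - t) * rd y t"
abbreviation "Am x \<equiv> integral {..x} (\<lambda>y. y * rd y t) - x * integral {..x} (\<lambda>y. rd y t)"
abbreviation "om s \<equiv> integral UNIV (\<lambda>y. (1 + \<bar>y\<bar>) * \<bar>Rf s y\<bar>)"
abbreviation "Gq s \<equiv> quantile \<rho> f s"

lemma W_int: assumes st: "\<bar>s - t\<bar> < \<epsilon>"
  shows "(\<lambda>y. (1 + \<bar>y\<bar>) * \<bar>Rf s y\<bar>) integrable_on UNIV"
proof -
  have aR1: "(\<lambda>y. \<bar>Rf s y\<bar>) integrable_on UNIV" and aR2: "(\<lambda>y. \<bar>y * Rf s y\<bar>) integrable_on UNIV"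
    using R_ai[OF st] unfolding absolutely_integrable_on_def by auto
  have W: "(\<lambda>y. (1 + \<bar>y\<bar>) * \<bar>Rf s y\<bar>) = (\<lambda>y. \<bar>Rf s y\<bar> + \<bar>y * Rf s y\<bar>)"
    by (rule ext) (simp only: abs_mult distrib_right mult_1)
  show ?thesis unfolding W by (intro integrable_add aR1 aR2)
qed

lemma om_nonneg: assumes st: "\<bar>s - t\<bar> < \<epsilon>" shows "0 \<le> om s"
  by (rule integral_nonneg[OF W_int[OF st]]) simp

lemma R_bd: assumes st: "\<bar>s - t\<bar> < \<epsilon>"
  shows "(1 + \<bar>y\<bar>) * \<bar>Rf s y\<bar> \<le> 2 * h y * \<bar>s - t\<bar>"
proof -
  define c where "c = h y / (1 + \<bar>y\<bar>)"
  have r: "\<bar>t - t\<bar> < \<epsilon>" using eps by simp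
  have a: "\<bar>\<rho> y s - \<rho> y t\<bar> \<le> c * \<bar>s - t\<bar>" using mv[OF st] unfolding c_def .
  have b: "\<bar>rd y t\<bar> \<le> c" using rd_bd(1)[OF r] unfolding c_def .
  have b2: "\<bar>(s - t) * rd y t\<bar> \<le> c * \<bar>s - t\<bar>"
    using mult_left_mono[OF b, of "\<bar>s - t\<bar>"] by (simp add: abs_mult mult.commute)
  have "\<bar>Rf s y\<bar> \<le> 2 * c * \<bar>s - t\<bar>" using a b2 by linarith
  then have "(1 + \<bar>y\<bar>) * \<bar>Rf s y\<bar> \<le> (1 + \<bar>y\<bar>) * (2 * c * \<bar>s - t\<bar>)"
    by (rule mult_left_mono) simp
  also have "\<dots> = 2 * h y * \<bar>s - t\<bar>"
    unfolding c_def by (simp add: field_simps add_pos_nonneg)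
  finally show ?thesis .
qed

lemma ev_near: "eventually (\<lambda>s. \<bar>s - t\<bar> < \<epsilon> \<and> 0 < s \<and> s \<noteq> t) (at t)"
  unfolding eventually_at
  by (rule exI[of _ \<epsilon>]) (use eps in \<open>auto simp: dist_real_def\<close>)

lemma omega_lim: "((\<lambda>s. om s / \<bar>s - t\<bar>) \<longlongrightarrow> 0) (at t)"
  unfolding tendsto_at_iff_sequentially comp_def
proof (intro allI impI)
  fix X :: "nat \<Rightarrow> real" assume X1: "\<forall>i. X i \<in> UNIV - {t}" and X2: "X \<longlonglongrightarrow> t"
  obtain N where N: "\<And>n. n \<ge> N \<Longrightarrow> norm (X n - t) < \<epsilon>"
    using LIMSEQ_D[OF X2 eps(1)] by blast
  define Y where "Y i = X (i + N)" for i
  have Ye: "\<bar>Y i - t\<bar> < \<epsilon>" for i using N[of "i + N"] by (simp add: Y_def)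
  have Yne: "Y i \<noteq> t" for i using X1 by (simp add: Y_def)
  have Yl: "Y \<longlonglongrightarrow> t" unfolding Y_def using LIMSEQ_ignore_initial_segment[OF X2] .
  define F where "F k y = (1 + \<bar>y\<bar>) * \<bar>Rf (Y k) y\<bar> / \<bar>Y k - t\<bar>" for k y
  have hi: "h integrable_on UNIV" using h_ai absolutely_integrable_on_def by blast
  have Fi: "F k integrable_on UNIV" for k
    unfolding F_def using integrable_on_mult_right[OF W_int[OF Ye[of k]], of "1 / \<bar>Y k - t\<bar>"]
    by simp
  have Fb: "norm (F k y) \<le> 2 * h y" if "y \<in> UNIV" for k y
  proof -
    have "0 \<le> F k y" unfolding F_def by simp
    moreover have "F k y \<le> 2 * h y * \<bar>Y k - t\<bar> / \<bar>Y k - t\<bar>"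
      unfolding F_def by (rule divide_right_mono[OF R_bd[OF Ye[of k]]]) simp
    ultimately show ?thesis using Yne[of k] by simp
  qed
  have Fc: "(\<lambda>k. F k y) \<longlonglongrightarrow> 0" if "y \<in> UNIV" for y
  proof -
    have d: "((\<lambda>s. (\<rho> y s - \<rho> y t) / (s - t)) \<longlongrightarrow> rd y t) (at t)"
      using rho_deriv[OF t_pos, of y] unfolding has_field_derivative_iff .
    have "filterlim Y (at t) sequentially"
      unfolding filterlim_at using Yl Yne by auto
    from filterlim_compose[OF d this]
    have "(\<lambda>k. (\<rho> y (Y k) - \<rho> y t) / (Y k - t)) \<longlonglongrightarrow> rd y t" .
    then have "(\<lambda>k. (1 + \<bar>y\<bar>) * \<bar>(\<rho> y (Y k) - \<rho> y t) / (Y k - t) - rd y t\<bar>) \<longlonglongrightarrow> (1 + \<bar>y\<bar>) * \<bar>rd y t - rd y t\<bar>"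
      by (intro tendsto_intros)
    moreover have "F k y = (1 + \<bar>y\<bar>) * \<bar>(\<rho> y (Y k) - \<rho> y t) / (Y k - t) - rd y t\<bar>" for k
    proof -
      have "Y k - t \<noteq> 0" using Yne[of k] by simp
      then have "(\<rho> y (Y k) - \<rho> y t) / (Y k - t) - rd y t = Rf (Y k) y / (Y k - t)"
        by (simp add: field_simps)
      then show ?thesis unfolding F_def by (simp add: abs_divide)
    qed
    ultimately show ?thesis by simp
  qed
  have hi2: "(\<lambda>y. 2 * h y) integrable_on UNIV" using integrable_on_mult_right[OF hi, of 2] .
  have "(\<lambda>k. integral UNIV (F k)) \<longlonglongrightarrow> integral UNIV (\<lambda>y. 0::real)"
    using dominated_convergence(2)[OF Fi hi2 Fb Fc] by simp
  then have "(\<lambda>k. om (Y k) / \<bar>Y k - t\<bar>) \<longlonglongrightarrow> 0"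
    unfolding F_def by simp
  then show "(\<lambda>n. om (X n) / \<bar>X n - t\<bar>) \<longlonglongrightarrow> 0"
    unfolding Y_def by (rule LIMSEQ_offset)
qed

lemma cdf_cont_s: "((\<lambda>s. cdf \<rho> x s) \<longlongrightarrow> cdf \<rho> x t) (at t)"
proof -
  have hi: "h integrable_on UNIV" using h_ai absolutely_integrable_on_def by blast
  have "((\<lambda>s. cdf \<rho> x s - cdf \<rho> x t) \<longlongrightarrow> 0) (at t)"
  proof (rule Lim_null_comparison)
    show "eventually (\<lambda>s. norm (cdf \<rho> x s - cdf \<rho> x t) \<le> integral UNIV h * \<bar>s - t\<bar>) (at t)"
      using ev_near
    proof eventually_elim
      case (elim s)
      then have st: "\<bar>s - t\<bar> < \<epsilon>" and s: "0 \<le> s" by auto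
      have t: "0 \<le> t" using eps by simp
      have g: "(\<lambda>y. \<rho> y s - \<rho> y t) absolutely_integrable_on UNIV"
        by (intro set_integral_diff(1) dens_facts(2) s t)
      have "cdf \<rho> x s - cdf \<rho> x t = integral {..x} (\<lambda>y. \<rho> y s - \<rho> y t)"
        unfolding cdf_def by (rule integral_diff[symmetric]) (intro ai_atMost(2) dens_facts(2) s t)+
      then have "norm (cdf \<rho> x s - cdf \<rho> x t) \<le> integral UNIV (\<lambda>y. \<bar>\<rho> y s - \<rho> y t\<bar>)"
        using int_abs_le[OF g, of x] by simp
      also have "\<dots> \<le> integral UNIV (\<lambda>y. h y * \<bar>s - t\<bar>)"
        by (rule integral_le) (use g mv2[OF st] integrable_on_mult_left[OF hi] in \<open>auto simp: absolutely_integrable_on_def\<close>)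
      also have "\<dots> = integral UNIV h * \<bar>s - t\<bar>" by simp
      finally show ?case .
    qed
    have "((\<lambda>s. integral UNIV h * \<bar>s - t\<bar>) \<longlongrightarrow> integral UNIV h * \<bar>t - t\<bar>) (at t)"
      by (intro tendsto_intros)
    then show "((\<lambda>s. integral UNIV h * \<bar>s - t\<bar>) \<longlongrightarrow> 0) (at t)" by simp
  qed
  then show ?thesis using Lim_null by blast
qed

lemma G_cont: "((\<lambda>s. Gq s) \<longlongrightarrow> Gq t) (at t)"
proof (rule order_tendstoI)
  interpret P: pdens1 "\<lambda>y. \<rho> y t" by (rule pd[OF t_pos])
  have CGt: "cdf \<rho> (Gq t) t = f" using P.CQ[OF f_in] by (simp add: cdf_eq[OF t_pos] quantile_eq[OF t_pos])
  have CGs: "cdf \<rho> (Gq s) s = f" if "0 < s" for s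
  proof -
    interpret S: pdens1 "\<lambda>y. \<rho> y s" by (rule pd[OF that])
    show ?thesis using S.CQ[OF f_in] by (simp add: cdf_eq[OF that] quantile_eq[OF that])
  qed
  have lt: "cdf \<rho> a s < cdf \<rho> b s \<longleftrightarrow> a < b" if "0 < s" for a b s
  proof -
    interpret S: pdens1 "\<lambda>y. \<rho> y s" by (rule pd[OF that])
    show ?thesis using S.C_less_iff by (simp add: cdf_eq[OF that])
  qed
  fix a assume a: "a < Gq t"
  then have "cdf \<rho> a t < f" using lt[OF t_pos] CGt by metis
  then have "eventually (\<lambda>s. cdf \<rho> a s < f) (at t)" using order_tendstoD(2)[OF cdf_cont_s] by blast
  with ev_near show "eventually (\<lambda>s. a < Gq s) (at t)"
  proof eventually_elim
    case (elim s) then show ?case using lt[of s a "Gq s"] CGs[of s] by auto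
  qed
next
  interpret P: pdens1 "\<lambda>y. \<rho> y t" by (rule pd[OF t_pos])
  have CGt: "cdf \<rho> (Gq t) t = f" using P.CQ[OF f_in] by (simp add: cdf_eq[OF t_pos] quantile_eq[OF t_pos])
  have CGs: "cdf \<rho> (Gq s) s = f" if "0 < s" for s
  proof -
    interpret S: pdens1 "\<lambda>y. \<rho> y s" by (rule pd[OF that])
    show ?thesis using S.CQ[OF f_in] by (simp add: cdf_eq[OF that] quantile_eq[OF that])
  qed
  have lt: "cdf \<rho> a s < cdf \<rho> b s \<longleftrightarrow> a < b" if "0 < s" for a b s
  proof -
    interpret S: pdens1 "\<lambda>y. \<rho> y s" by (rule pd[OF that])
    show ?thesis using S.C_less_iff by (simp add: cdf_eq[OF that])
  qed
  fix a assume a: "Gq t < a"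
  then have "f < cdf \<rho> a t" using lt[OF t_pos] CGt by metis
  then have "eventually (\<lambda>s. f < cdf \<rho> a s) (at t)" using order_tendstoD(1)[OF cdf_cont_s] by blast
  with ev_near show "eventually (\<lambda>s. Gq s < a) (at t)"
  proof eventually_elim
    case (elim s) then show ?case using lt[of s "Gq s" a] CGs[of s] by auto
  qed
qed

lemma A_cont: "isCont (\<lambda>x. Am x) x"
proof -
  have r: "\<bar>t - t\<bar> < \<epsilon>" using eps by simp
  have c1: "continuous_on UNIV (\<lambda>y. rd y t)" by (rule rd_cont[OF t_pos])
  have c2: "continuous_on UNIV (\<lambda>y. y * rd y t)" by (intro continuous_intros c1)
  have i1: "isCont (\<lambda>x. integral {..x} (\<lambda>y. rd y t)) x"
    using int_deriv[OF rd_ai(1)[OF r] c1] DERIV_isCont by blast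
  have i2: "isCont (\<lambda>x. integral {..x} (\<lambda>y. y * rd y t)) x"
    using int_deriv[OF rd_ai(2)[OF r] c2] DERIV_isCont by blast
  show ?thesis by (intro continuous_intros i1 i2)
qed


lemma eb_lem: assumes st: "\<bar>s - t\<bar> < \<epsilon>"
  shows "\<bar>(pmom \<rho> x s + x * (f - cdf \<rho> x s)) - (pmom \<rho> x t + x * (f - cdf \<rho> x t)) - Am x * (s - t)\<bar>
    \<le> (1 + \<bar>x\<bar>) * om s"
  by (subst K_diff[OF st]) (rule e_bound[OF st])

lemma L_deriv: "((\<lambda>s. lorenz \<rho> f s) has_real_derivative Am (Gq t)) (at t)"
proof -
  define B where "B s = (1 + \<bar>Gq t\<bar>) * (om s / \<bar>s - t\<bar>) + (1 + \<bar>Gq s\<bar>) * (om s / \<bar>s - t\<bar>) + \<bar>Am (Gq s) - Am (Gq t)\<bar>" for s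
  have AG: "((\<lambda>s. Am (Gq s)) \<longlongrightarrow> Am (Gq t)) (at t)"
    by (rule isCont_tendsto_compose[OF A_cont G_cont])
  have "(B \<longlongrightarrow> (1 + \<bar>Gq t\<bar>) * 0 + (1 + \<bar>Gq t\<bar>) * 0 + \<bar>Am (Gq t) - Am (Gq t)\<bar>) (at t)"
    unfolding B_def by (intro tendsto_intros omega_lim G_cont AG)
  then have Bl: "(B \<longlongrightarrow> 0) (at t)" by simp
  have ev: "eventually (\<lambda>s. norm ((lorenz \<rho> f s - lorenz \<rho> f t) / (s - t) - Am (Gq t)) \<le> B s) (at t)"
    using ev_near
  proof eventually_elim
    case (elim s)
    then have st: "\<bar>s - t\<bar> < \<epsilon>" and s: "0 < s" and sne: "s \<noteq> t" by auto
    have om0: "0 \<le> om s" by (rule om_nonneg[OF st])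
    have nn1: "0 \<le> (1 + \<bar>Gq s\<bar>) * om s" "0 \<le> (1 + \<bar>Gq t\<bar>) * om s" using om0 by simp_all
    have sw: "\<bar>lorenz \<rho> f s - lorenz \<rho> f t - Am (Gq t) * (s - t)\<bar>
       \<le> (1 + \<bar>Gq t\<bar>) * om s + (1 + \<bar>Gq s\<bar>) * om s + \<bar>Am (Gq s) - Am (Gq t)\<bar> * \<bar>s - t\<bar>"
      by (rule sandwich_arith[OF K_max[OF s, of "Gq t"] lorenz_K[OF t_pos] lorenz_K[OF s] K_max[OF t_pos, of "Gq s"]
            eb_lem[OF st, of "Gq t"] eb_lem[OF st, of "Gq s"] nn1(2) nn1(1)])
    have dne: "s - t \<noteq> 0" using sne by simp
    have "\<bar>(lorenz \<rho> f s - lorenz \<rho> f t) / (s - t) - Am (Gq t)\<bar>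
       \<le> ((1 + \<bar>Gq t\<bar>) * om s + (1 + \<bar>Gq s\<bar>) * om s + \<bar>Am (Gq s) - Am (Gq t)\<bar> * \<bar>s - t\<bar>) / \<bar>s - t\<bar>"
      by (rule div_arith[OF dne sw])
    also have "\<dots> = B s" unfolding B_def by (rule B_arith[OF dne])
    finally show ?case by simp
  qed
  have "((\<lambda>s. (lorenz \<rho> f s - lorenz \<rho> f t) / (s - t) - Am (Gq t)) \<longlongrightarrow> 0) (at t)"
    by (rule Lim_null_comparison[OF ev Bl])
  then show ?thesis unfolding has_field_derivative_iff using Lim_null by blast
qed


abbreviation "Pf x \<equiv> \<Sigma> x t (dens \<rho> t) * \<rho> x t"
abbreviation "Ef x \<equiv> D x t (dens \<rho> t) * \<rho> x t"
abbreviation "Qd x \<equiv> deriv (\<lambda>y. D y t (dens \<rho> t) * \<rho> y t) x"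

lemma Pf_deriv: "((\<lambda>x. Pf x) has_real_derivative deriv (\<lambda>x. Pf x) y) (at y)"
  using diff_drift[OF t_pos] DERIV_deriv_iff_real_differentiable by blast

lemma Ef_deriv: "((\<lambda>x. Ef x) has_real_derivative Qd y) (at y)"
  using diff_diff1[OF t_pos] DERIV_deriv_iff_real_differentiable by blast

lemma Qd_deriv: "((\<lambda>x. Qd x) has_real_derivative deriv (\<lambda>x. Qd x) y) (at y)"
proof -
  have "(deriv (\<lambda>y. D y t (dens \<rho> t) * \<rho> y t) has_real_derivative deriv (deriv (\<lambda>y. D y t (dens \<rho> t) * \<rho> y t)) y) (at y)"
    using diff_diff2[OF t_pos] DERIV_deriv_iff_real_differentiable by blast
  then show ?thesis by (simp add: eta_contract_eq)
qed

lemma QP_deriv: "((\<lambda>x. Qd x - Pf x) has_real_derivative rd y t) (at y)"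
proof -
  have "((\<lambda>x. Qd x - Pf x) has_real_derivative deriv (\<lambda>x. Qd x) y - deriv (\<lambda>x. Pf x) y) (at y)"
    by (rule DERIV_diff[OF Qd_deriv Pf_deriv])
  moreover have "rd y t = deriv (\<lambda>x. Qd x) y - deriv (\<lambda>x. Pf x) y"
    using pde[OF t_pos, of y] by simp
  ultimately show ?thesis by simp
qed

lemma int_rd: "integral {..x} (\<lambda>y. rd y t) = Qd x - Pf x"
proof -
  have r: "\<bar>t - t\<bar> < \<epsilon>" using eps by simp
  have ai: "(\<lambda>y. rd y t) absolutely_integrable_on UNIV" by (rule rd_ai(1)[OF r])
  have ftc: "integral {a..x} (\<lambda>y. rd y t) = (Qd x - Pf x) - (Qd a - Pf a)" if "a \<le> x" for a
  proof -
    have "((\<lambda>y. rd y t) has_integral ((Qd x - Pf x) - (Qd a - Pf a))) {a..x}"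
    proof (rule fundamental_theorem_of_calculus[OF that])
      fix y assume "y \<in> {a..x}"
      show "((\<lambda>x. Qd x - Pf x) has_vector_derivative rd y t) (at y within {a..x})"
        using QP_deriv[of y] by (simp add: has_real_derivative_iff_has_vector_derivative has_vector_derivative_at_within)
    qed
    then show ?thesis by (rule integral_unique)
  qed
  have bd: "((\<lambda>x. Pf x) \<longlongrightarrow> 0) at_bot" "((\<lambda>x. Qd x) \<longlongrightarrow> 0) at_bot"
    using bdry[OF t_pos] by auto
  have lim: "((\<lambda>a. integral {..a} (\<lambda>y. rd y t) + ((Qd x - Pf x) - (Qd a - Pf a))) \<longlongrightarrow> 0 + ((Qd x - Pf x) - (0 - 0))) at_bot"
    by (intro tendsto_intros tail_bot[OF ai] bd)
  have ev: "eventually (\<lambda>a. integral {..a} (\<lambda>y. rd y t) + ((Qd x - Pf x) - (Qd a - Pf a)) = integral {..x} (\<lambda>y. rd y t)) at_bot"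
    unfolding eventually_at_bot_linorder
    by (rule exI[of _ x]) (auto simp: int_split[OF ai] ftc)
  have L2: "((\<lambda>a::real. integral {..x} (\<lambda>y. rd y t)) \<longlongrightarrow> 0 + ((Qd x - Pf x) - (0 - 0))) at_bot"
    by (rule Lim_transform_eventually[OF lim ev])
  have "integral {..x} (\<lambda>y. rd y t) = 0 + ((Qd x - Pf x) - (0 - 0))"
    by (rule tendsto_unique[OF trivial_limit_at_bot_linorder tendsto_const L2])
  then show ?thesis by simp
qed

lemma Pi_deriv: "((\<lambda>x. Am x + Ef x) has_real_derivative Pf x) (at x)"
proof -
  have r: "\<bar>t - t\<bar> < \<epsilon>" using eps by simp
  have c1: "continuous_on UNIV (\<lambda>y. rd y t)" by (rule rd_cont[OF t_pos])
  have c2: "continuous_on UNIV (\<lambda>y. y * rd y t)" by (intro continuous_intros c1)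
  have d1: "((\<lambda>x. integral {..x} (\<lambda>y. y * rd y t)) has_real_derivative x * rd x t) (at x)"
    by (rule int_deriv[OF rd_ai(2)[OF r] c2])
  have d2: "((\<lambda>x. integral {..x} (\<lambda>y. rd y t)) has_real_derivative rd x t) (at x)"
    by (rule int_deriv[OF rd_ai(1)[OF r] c1])
  have "((\<lambda>x. Am x + Ef x) has_real_derivative
      x * rd x t - (1 * integral {..x} (\<lambda>y. rd y t) + rd x t * x) + Qd x) (at x)"
    by (intro DERIV_add DERIV_diff DERIV_mult d1 d2 DERIV_ident Ef_deriv)
  moreover have "x * rd x t - (1 * integral {..x} (\<lambda>y. rd y t) + rd x t * x) + Qd x = Pf x"
    by (simp add: int_rd)
  ultimately show ?thesis by simp
qed

lemma Pi_bot: "((\<lambda>x. Am x + Ef x) \<longlongrightarrow> 0) at_bot"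
proof -
  have r: "\<bar>t - t\<bar> < \<epsilon>" using eps by simp
  have b: "((\<lambda>x. Ef x) \<longlongrightarrow> 0) at_bot" "((\<lambda>x. x * Pf x) \<longlongrightarrow> 0) at_bot" "((\<lambda>x. x * Qd x) \<longlongrightarrow> 0) at_bot"
    using bdry[OF t_pos] by auto
  have "((\<lambda>x. integral {..x} (\<lambda>y. y * rd y t) - (x * Qd x - x * Pf x) + Ef x) \<longlongrightarrow> 0 - (0 - 0) + 0) at_bot"
    by (intro tendsto_intros tail_bot[OF rd_ai(2)[OF r]] b)
  moreover have "(\<lambda>x. integral {..x} (\<lambda>y. y * rd y t) - (x * Qd x - x * Pf x) + Ef x) = (\<lambda>x. Am x + Ef x)"
    by (rule ext) (simp add: int_rd algebra_simps)
  ultimately show ?thesis by simp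
qed


lemma final: "((\<lambda>s. lorenz \<rho> f s) has_real_derivative
           (- D (deriv (\<lambda>g. lorenz \<rho> g t) f) t
                (\<lambda>x. 1 / deriv (deriv (\<lambda>g. lorenz \<rho> g t)) (cdf \<rho> x t))
              / deriv (deriv (\<lambda>g. lorenz \<rho> g t)) f
            + integral {0..f} (\<lambda>g. \<Sigma> (deriv (\<lambda>h. lorenz \<rho> h t) g) t
                (\<lambda>x. 1 / deriv (deriv (\<lambda>h. lorenz \<rho> h t)) (cdf \<rho> x t))))) (at t)"
proof -
  interpret P: pdens1 "\<lambda>y. \<rho> y t" by (rule pd[OF t_pos])
  have LE: "(\<lambda>g. lorenz \<rho> g t) = P.Lor" by (rule ext) (simp add: lorenz_eq[OF t_pos])
  have P3: "(\<lambda>x. 1 / deriv (deriv P.Lor) (cdf \<rho> x t)) = dens \<rho> t"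
    by (rule ext) (simp add: cdf_eq[OF t_pos] P.ddLor_C dens_def)
  have GQ: "Gq t = P.Q f" by (rule quantile_eq[OF t_pos])
  have d1: "deriv P.Lor f = P.Q f" by (rule P.dLor[OF f_in])
  have d2: "deriv (deriv P.Lor) f = inverse (\<rho> (P.Q f) t)" by (rule P.ddLor[OF f_in])
  define \<Psi> where "\<Psi> g = (if g \<le> 0 then 0 else Am (P.Q g) + Ef (P.Q g))" for g
  have \<Psi>d: "(\<Psi> has_real_derivative \<Sigma> (P.Q g) t (dens \<rho> t)) (at g)" if g: "0 < g" "g < 1" for g
  proof -
    have "((\<lambda>g. Am (P.Q g) + Ef (P.Q g)) has_real_derivative Pf (P.Q g) * inverse (\<rho> (P.Q g) t)) (at g)"
      by (rule DERIV_chain2[OF Pi_deriv P.Q_deriv[OF g]])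
    moreover have "Pf (P.Q g) * inverse (\<rho> (P.Q g) t) = \<Sigma> (P.Q g) t (dens \<rho> t)"
      using P.p_pos[of "P.Q g"] by simp
    ultimately have der: "((\<lambda>g. Am (P.Q g) + Ef (P.Q g)) has_real_derivative \<Sigma> (P.Q g) t (dens \<rho> t)) (at g)"
      by simp
    show ?thesis
      by (rule has_field_derivative_transform_within_open[OF der, where S="{0<..}"]) (use g in \<open>auto simp: \<Psi>_def\<close>)
  qed
  have \<Psi>0: "(\<Psi> \<longlongrightarrow> 0) (at_right 0)"
  proof -
    have lim: "((\<lambda>g. Am (P.Q g) + Ef (P.Q g)) \<longlongrightarrow> 0) (at_right 0)"
      by (rule filterlim_compose[OF Pi_bot P.Q_bot])
    have ev: "eventually (\<lambda>g. Am (P.Q g) + Ef (P.Q g) = \<Psi> g) (at_right (0::real))"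
      unfolding eventually_at_right_field by (rule exI[of _ 1]) (auto simp: \<Psi>_def)
    show ?thesis by (rule Lim_transform_eventually[OF lim ev])
  qed
  have \<Psi>c: "continuous_on {0..f} \<Psi>"
    unfolding continuous_on_eq_continuous_within
  proof
    fix g assume g: "g \<in> {0..f}"
    show "continuous (at g within {0..f}) \<Psi>"
    proof (cases "g = 0")
      case True
      have "(\<Psi> \<longlongrightarrow> \<Psi> 0) (at 0 within {0..f})"
        using \<Psi>0 at_within_Icc_at_right[OF f_in(1)] by (simp add: \<Psi>_def)
      then show ?thesis using True continuous_within by blast
    next
      case False
      then have "0 < g" "g < 1" using g f_in by auto
      then have "isCont \<Psi> g" using \<Psi>d DERIV_isCont by blast
      then show ?thesis using continuous_at_imp_continuous_within by blast
    qed
  qed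
  have HI: "((\<lambda>g. \<Sigma> (deriv P.Lor g) t (dens \<rho> t)) has_integral (\<Psi> f - \<Psi> 0)) {0..f}"
  proof (rule fundamental_theorem_of_calculus_interior[OF _ \<Psi>c])
    show "0 \<le> f" using f_in by simp
    fix g assume "g \<in> {0<..<f}"
    then have g: "0 < g" "g < 1" using f_in by auto
    show "(\<Psi> has_vector_derivative \<Sigma> (deriv P.Lor g) t (dens \<rho> t)) (at g)"
      using \<Psi>d[OF g] P.dLor[OF g] by (simp add: has_real_derivative_iff_has_vector_derivative)
  qed
  then have I: "integral {0..f} (\<lambda>g. \<Sigma> (deriv P.Lor g) t (dens \<rho> t)) = Am (P.Q f) + Ef (P.Q f)"
    using f_in by (simp add: integral_unique \<Psi>_def)
  have "- D (deriv (\<lambda>g. lorenz \<rho> g t) f) t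
                (\<lambda>x. 1 / deriv (deriv (\<lambda>g. lorenz \<rho> g t)) (cdf \<rho> x t))
              / deriv (deriv (\<lambda>g. lorenz \<rho> g t)) f
            + integral {0..f} (\<lambda>g. \<Sigma> (deriv (\<lambda>h. lorenz \<rho> h t) g) t
                (\<lambda>x. 1 / deriv (deriv (\<lambda>h. lorenz \<rho> h t)) (cdf \<rho> x t)))
       = - D (P.Q f) t (dens \<rho> t) / inverse (\<rho> (P.Q f) t) + (Am (P.Q f) + Ef (P.Q f))"
    unfolding LE P3 d1 d2 I ..
  also have "\<dots> = Am (Gq t)" unfolding GQ by (simp add: divide_inverse)
  finally show ?thesis using L_deriv by simp
qed

end

theorem mainTheorem1:
  fixes \<Sigma> D :: "real \<Rightarrow> real \<Rightarrow> (real \<Rightarrow> real) \<Rightarrow> real"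
    and \<rho> :: "real \<Rightarrow> real \<Rightarrow> real"
    and \<rho>0 :: "real \<Rightarrow> real"
  assumes D_pos: "\<And>x t p. 0 < t \<Longrightarrow> Pac_pos p \<Longrightarrow> 0 < D x t p"
    and init: "Pac_pos \<rho>0" "\<And>x. \<rho> x 0 = \<rho>0 x"
    and dens_ok: "\<And>t. 0 \<le> t \<Longrightarrow> Pac_pos (dens \<rho> t) \<and> finite_first_moment (dens \<rho> t)"
    and decay: "\<And>t. 0 \<le> t \<Longrightarrow> ((\<lambda>x. \<rho> x t) \<longlongrightarrow> 0) at_top \<and> ((\<lambda>x. \<rho> x t) \<longlongrightarrow> 0) at_bot"
    (* regularity ("sufficiently smooth") *)
    and cont_rho: "continuous_on (UNIV \<times> {0<..}) (\<lambda>(x, t). \<rho> x t)"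
    and diff_t: "\<And>x t. 0 < t \<Longrightarrow> (\<lambda>s. \<rho> x s) differentiable (at t)"
    and cont_rho_t: "continuous_on (UNIV \<times> {0<..}) (\<lambda>(x, t). deriv (\<lambda>s. \<rho> x s) t)"
    and dom_rho_t: "\<And>t. 0 < t \<Longrightarrow> \<exists>\<epsilon> h. 0 < \<epsilon> \<and> \<epsilon> < t \<and> h absolutely_integrable_on UNIV \<and>
         (\<forall>s. \<bar>s - t\<bar> < \<epsilon> \<longrightarrow> (\<forall>y. (1 + \<bar>y\<bar>) * \<bar>deriv (\<lambda>r. \<rho> y r) s\<bar> \<le> h y))"
    and diff_drift: "\<And>x t. 0 < t \<Longrightarrow> (\<lambda>y. \<Sigma> y t (dens \<rho> t) * \<rho> y t) differentiable (at x)"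
    and diff_diff1: "\<And>x t. 0 < t \<Longrightarrow> (\<lambda>y. D y t (dens \<rho> t) * \<rho> y t) differentiable (at x)"
    and diff_diff2: "\<And>x t. 0 < t \<Longrightarrow> deriv (\<lambda>y. D y t (dens \<rho> t) * \<rho> y t) differentiable (at x)"
    (* the PDE *)
    and pde: "\<And>x t. 0 < t \<Longrightarrow>
         deriv (\<lambda>s. \<rho> x s) t =
           - deriv (\<lambda>y. \<Sigma> y t (dens \<rho> t) * \<rho> y t) x
           + deriv (deriv (\<lambda>y. D y t (dens \<rho> t) * \<rho> y t)) x"
    (* vanishing boundary terms at -infinity *)
    and bdry: "\<And>t. 0 < t \<Longrightarrow>
         ((\<lambda>x. \<Sigma> x t (dens \<rho> t) * \<rho> x t) \<longlongrightarrow> 0) at_bot \<and>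
         ((\<lambda>x. deriv (\<lambda>y. D y t (dens \<rho> t) * \<rho> y t) x) \<longlongrightarrow> 0) at_bot \<and>
         ((\<lambda>x. D x t (dens \<rho> t) * \<rho> x t) \<longlongrightarrow> 0) at_bot \<and>
         ((\<lambda>x. x * (\<Sigma> x t (dens \<rho> t) * \<rho> x t)) \<longlongrightarrow> 0) at_bot \<and>
         ((\<lambda>x. x * deriv (\<lambda>y. D y t (dens \<rho> t) * \<rho> y t) x) \<longlongrightarrow> 0) at_bot"
    and f_in: "0 < f" "f < 1"
    and t_pos: "0 < t"
  shows "((\<lambda>s. lorenz \<rho> f s) has_real_derivative
           (- D (deriv (\<lambda>g. lorenz \<rho> g t) f) t
                (\<lambda>x. 1 / deriv (deriv (\<lambda>g. lorenz \<rho> g t)) (cdf \<rho> x t))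
              / deriv (deriv (\<lambda>g. lorenz \<rho> g t)) f
            + integral {0..f} (\<lambda>g. \<Sigma> (deriv (\<lambda>h. lorenz \<rho> h t) g) t
                (\<lambda>x. 1 / deriv (deriv (\<lambda>h. lorenz \<rho> h t)) (cdf \<rho> x t))))) (at t)"
  proof -
  obtain \<epsilon> h where e: "0 < \<epsilon>" "\<epsilon> < t" and hai: "h absolutely_integrable_on UNIV"
    and hb0: "\<forall>s. \<bar>s - t\<bar> < \<epsilon> \<longrightarrow> (\<forall>y. (1 + \<bar>y\<bar>) * \<bar>deriv (\<lambda>r. \<rho> y r) s\<bar> \<le> h y)"
    using dom_rho_t[OF t_pos] by blast
  have hb: "\<And>s y. \<bar>s - t\<bar> < \<epsilon> \<Longrightarrow> (1 + \<bar>y\<bar>) * \<bar>deriv (\<lambda>r. \<rho> y r) s\<bar> \<le> h y"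
    using hb0 by blast
  show ?thesis
    by (rule final[where \<rho>=\<rho> and t=t and f=f and \<epsilon>=\<epsilon> and h=h and \<Sigma>=\<Sigma> and D=D, OF dens_ok cont_rho diff_t cont_rho_t e hai hb f_in diff_drift diff_diff1 diff_diff2 pde bdry])
qed

end
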